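(* Let $n\ge1$ and $\mathbf t=[t_0,\dots,t_{n-1}]\in\Delta_{n-1}$. The edge weighting $c_{\mathbf t}:E_n\to\mathbb C$, $c_{\mathbf t}(ij) = (-1)^{\mathrm{par}_k(i)}\sqrt{t_k}$ for the edge $ij$ ($i\in U_n$) with $j = i\#k$, is admissible, and $U_n(c_{\mathbf t}) = U_n$.
   Context: For $n\ge1$, identify integers $0\le i<2^n$ with their $n$-digit binary representations $i=\sum_k i_k2^k$; $\mathrm{par}_k(i)=\sum_{\ell=0}^k i_\ell\bmod 2$ and $i\#k$ is $i$ with its $k$-th digit flipped. The hypercube $Q_n$ has vertex classes $U_n=\{i<2^n\mid\mathrm{par}_{n-1}(i)=0\}$, $V_n=\{j<2^n\mid \mathrm{par}_{n-1}(j)=1\}$ and edge set $E_n$ of pairs $ij$ ($i\in U_n$, $j\in V_n$, $j=i\#k$ for some $k<n$); $\mathcal N(x)$ is the set of neighbors of $x$. $\Delta_{n-1}=\{[t_0,\dots,t_{n-1}]\mid t_k\ge0,\sum t_k=1\}$. For $c:E_n\to\mathbb C$, $Q_n(c)=(U_n(c),V_n(c),E_n(c))$ is the subgraph formed by the edges with $c(ij)\ne0$ and their endpoints; $c$ is admissible if $\sum_{i\in\mathcal N(j_1)\cap\mathcal N(j_2)}c(ij_1)\overline{c(ij_2)}=\delta_{j_1j_2}$ for all $j_1,j_2\in V_n(c)$ and $\sum_{j\in\mathcal N(i_1)\cap\mathcal N(i_2)}c(i_1j)\overline{c(i_2j)}=\delta_{i_1i_2}$ for all $i_1,i_2\in U_n(c)$.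 *)

theory Defs
  imports Complex_Main
begin

text \<open>Vertices of Q_n are naturals i < 2^n; digit k of i is bit i k.\<close>

definition par :: "nat \<Rightarrow> nat \<Rightarrow> nat" where
  "par k i = (\<Sum>l\<le>k. if bit i l then 1 else 0) mod 2"

definition flip :: "nat \<Rightarrow> nat \<Rightarrow> nat" where
  "flip i k = flip_bit k i"

definition Uset :: "nat \<Rightarrow> nat set" where
  "Uset n = {i. i < 2^n \<and> par (n - 1) i = 0}"

definition Vset :: "nat \<Rightarrow> nat set" where
  "Vset n = {j. j < 2^n \<and> par (n - 1) j = 1}"

definition Eset :: "nat \<Rightarrow> (nat \<times> nat) set" where
  "Eset n = {(i, j). i \<in> Uset n \<and> j \<in> Vset n \<and> (\<exists>k<n. j = flip i k)}"

definition nbrs :: "nat \<Rightarrow> nat \<Rightarrow> nat set" where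
  "nbrs n x = {y. y < 2^n \<and> (\<exists>k<n. y = flip x k)}"

definition simplex :: "nat \<Rightarrow> (nat \<Rightarrow> real) \<Rightarrow> bool" where
  "simplex n t \<longleftrightarrow> (\<forall>k<n. t k \<ge> 0) \<and> (\<Sum>k<n. t k) = 1"

text \<open>Edge weightings are functions on pairs (i,j), i in U_n; only values on Eset n matter.\<close>
definition Uc :: "nat \<Rightarrow> (nat \<times> nat \<Rightarrow> complex) \<Rightarrow> nat set" where
  "Uc n c = {i. \<exists>j. (i, j) \<in> Eset n \<and> c (i, j) \<noteq> 0}"

definition Vc :: "nat \<Rightarrow> (nat \<times> nat \<Rightarrow> complex) \<Rightarrow> nat set" where
  "Vc n c = {j. \<exists>i. (i, j) \<in> Eset n \<and> c (i, j) \<noteq> 0}"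

definition admissible :: "nat \<Rightarrow> (nat \<times> nat \<Rightarrow> complex) \<Rightarrow> bool" where
  "admissible n c \<longleftrightarrow>
     (\<forall>j1\<in>Vc n c. \<forall>j2\<in>Vc n c.
        (\<Sum>i\<in>nbrs n j1 \<inter> nbrs n j2. c (i, j1) * cnj (c (i, j2))) = (if j1 = j2 then 1 else 0)) \<and>
     (\<forall>i1\<in>Uc n c. \<forall>i2\<in>Uc n c.
        (\<Sum>j\<in>nbrs n i1 \<inter> nbrs n i2. c (i1, j) * cnj (c (i2, j))) = (if i1 = i2 then 1 else 0))"

definition ct :: "nat \<Rightarrow> (nat \<Rightarrow> real) \<Rightarrow> nat \<times> nat \<Rightarrow> complex" where
  "ct n t e = (case e of (i, j) \<Rightarrow>
     if (i, j) \<in> Eset n then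
       (let k = (THE k. k < n \<and> j = flip i k) in
          (-1) ^ par k i * complex_of_real (sqrt (t k)))
     else 0)"

end

theory Submission
  imports Defs
begin

lemma bit_flip: "bit (flip x a) l = (if l = a then \<not> bit x l else bit x l)"
  unfolding flip_def by (auto simp: bit_flip_bit_iff)

lemma flip_flip[simp]: "flip (flip x a) a = x"
  by (rule bit_eqI) (auto simp: bit_flip)

lemma flip_comm: "flip (flip x a) b = flip (flip x b) a"
  by (rule bit_eqI) (auto simp: bit_flip)

lemma flip_inj_idx: "flip x a = flip x b \<Longrightarrow> a = b"
  by (metis bit_flip)

lemma flip_inj: "flip x a = flip y a \<Longrightarrow> x = y"
  by (metis flip_flip)

lemma flip_ne: "flip x a \<noteq> x"
  by (metis bit_flip)

lemma flip_less: "x < 2^n \<Longrightarrow> a < n \<Longrightarrow> flip x a < (2::nat)^n"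
  unfolding flip_def
  by (metis take_bit_flip_bit_eq take_bit_nat_eq_self_iff not_le)

lemma flip2_eq:
  assumes "flip (flip x a) b = flip (flip x c) d" "a \<noteq> b"
  shows "(a = c \<and> b = d) \<or> (a = d \<and> b = c)"
proof -
  have h: "\<And>l. (l = a) \<noteq> (l = b) \<longleftrightarrow> (l = c) \<noteq> (l = d)"
  proof -
    fix l
    have "bit (flip (flip x a) b) l = bit (flip (flip x c) d) l" using assms by simp
    then show "(l = a) \<noteq> (l = b) \<longleftrightarrow> (l = c) \<noteq> (l = d)"
      by (auto simp: bit_flip split: if_splits)
  qed
  from h[of a] h[of b] h[of c] assms(2) show ?thesis by blast
qed

definition S :: "nat \<Rightarrow> nat \<Rightarrow> nat" where
  "S k x = (\<Sum>l\<le>k. if bit x l then 1 else 0)"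

lemma par_S: "par k x = S k x mod 2"
  unfolding par_def S_def by simp

lemma S_flip:
  "S k (flip x m) = (if m \<le> k then (if bit x m then S k x - 1 else S k x + 1) else S k x)
   \<and> (m \<le> k \<longrightarrow> bit x m \<longrightarrow> S k x \<ge> 1)"
proof (cases "m \<le> k")
  case True
  have fin: "finite {..k}" "m \<in> {..k}" using True by auto
  have A: "S k x = (if bit x m then 1 else 0) + (\<Sum>l\<in>{..k}-{m}. if bit x l then 1 else 0)"
    unfolding S_def using sum.remove[OF fin, of "\<lambda>l. if bit x l then 1 else 0"] by simp
  have B: "S k (flip x m) = (if bit x m then 0 else 1) + (\<Sum>l\<in>{..k}-{m}. if bit x l then 1 else 0)"
  proof -
    have C: "(\<Sum>l\<in>{..k}-{m}. if bit (flip x m) l then 1 else 0) = (\<Sum>l\<in>{..k}-{m}. (if bit x l then 1 else 0::nat))"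
      by (rule sum.cong) (auto simp: bit_flip)
    have D: "(if bit (flip x m) m then 1 else 0) = (if bit x m then 0 else 1::nat)"
      by (simp add: bit_flip)
    have E: "S k (flip x m) = (if bit (flip x m) m then 1 else 0) + (\<Sum>l\<in>{..k}-{m}. if bit (flip x m) l then 1 else 0)"
      unfolding S_def by (rule sum.remove[OF fin])
    show ?thesis unfolding E C D ..

  qed
  show ?thesis using A B True by auto
next
  case False
  then show ?thesis unfolding S_def by (auto simp: bit_flip intro!: sum.cong)
qed

lemma sign_flip:
  "(-1::complex) ^ par k (flip x m) = (if m \<le> k then - ((-1) ^ par k x) else (-1) ^ par k x)"
  using S_flip[of k x m] unfolding par_S
  by (auto simp: minus_one_power_iff)

lemma sign_sq: "(-1::complex) ^ p * (-1) ^ p = 1"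
  by (simp add: minus_one_power_iff)

lemma mod2_Suc: "Suc r mod 2 = 1 - r mod (2::nat)"
  by (simp add: mod_Suc)
lemma mod2_pred: "(m::nat) \<ge> 1 \<Longrightarrow> (m - 1) mod 2 = 1 - m mod 2"
  by (cases m) (auto simp: mod_Suc)

lemma par_lt2: "par k x < 2" unfolding par_def by simp

lemma par_flip_top: "a < n \<Longrightarrow> par (n - 1) (flip x a) = 1 - par (n - 1) x"
  using S_flip[of "n-1" x a] unfolding par_S
proof -
  assume a: "a < n"
  show "S (n - 1) (flip x a) mod 2 = 1 - S (n - 1) x mod 2"
  proof (cases "bit x a")
    case True
    then have "S (n - 1) (flip x a) = S (n-1) x - 1" "S (n-1) x \<ge> 1" using S_flip[of "n-1" x a] a by auto
    then show ?thesis using mod2_pred by simp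
  next
    case False
    then have "S (n - 1) (flip x a) = S (n-1) x + 1" using S_flip[of "n-1" x a] a by auto
    then show ?thesis using mod2_Suc by simp
  qed
qed

lemma flip_U: "i \<in> Uset n \<Longrightarrow> a < n \<Longrightarrow> flip i a \<in> Vset n"
  unfolding Uset_def Vset_def using flip_less par_flip_top by auto

lemma flip_V: "j \<in> Vset n \<Longrightarrow> a < n \<Longrightarrow> flip j a \<in> Uset n"
  unfolding Uset_def Vset_def using flip_less par_flip_top by auto

lemma ct_val: assumes "i \<in> Uset n" "a < n"
  shows "ct n t (i, flip i a) = (-1) ^ par a i * complex_of_real (sqrt (t a))"
proof -
  have E: "(i, flip i a) \<in> Eset n" using assms flip_U unfolding Eset_def by blast
  have "(THE k. k < n \<and> flip i a = flip i k) = a"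
    using assms(2) flip_inj_idx by (intro the_equality) auto
  then show ?thesis using E unfolding ct_def by simp
qed

lemma ct_val2: assumes "j \<in> Vset n" "a < n"
  shows "ct n t (flip j a, j) = (-1) ^ par a (flip j a) * complex_of_real (sqrt (t a))"
  using ct_val[OF flip_V[OF assms] assms(2), of t] by simp

lemma nbrs_eq: "x < 2^n \<Longrightarrow> nbrs n x = flip x ` {..<n}"
  unfolding nbrs_def using flip_less by auto

lemma nbrs_int_none:
  assumes "x \<noteq> y" "\<not> (\<exists>a b. a < n \<and> b < n \<and> a \<noteq> b \<and> y = flip (flip x a) b)"
  shows "nbrs n x \<inter> nbrs n y = {}"
proof -
  { fix j assume "j \<in> nbrs n x" "j \<in> nbrs n y"
    then obtain c d where cd: "c < n" "d < n" "j = flip x c" "j = flip y d" unfolding nbrs_def by auto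
    then have "y = flip (flip x c) d" by (metis flip_flip)
    moreover have "c \<noteq> d" using cd assms(1) flip_inj by blast
    ultimately have False using assms(2) cd by blast }
  then show ?thesis by blast
qed

lemma nbrs_int_two:
  assumes "x < 2^n" "a < n" "b < n" "a \<noteq> b" "y = flip (flip x a) b"
  shows "nbrs n x \<inter> nbrs n y = {flip x a, flip x b}"
proof
  have y: "y < 2^n" using assms flip_less by auto
  show "{flip x a, flip x b} \<subseteq> nbrs n x \<inter> nbrs n y"
    using assms y by (auto simp: nbrs_eq) (metis flip_comm flip_flip imageI lessThan_iff)+
  show "nbrs n x \<inter> nbrs n y \<subseteq> {flip x a, flip x b}"
  proof
    fix j assume "j \<in> nbrs n x \<inter> nbrs n y"
    then obtain c d where cd: "c < n" "d < n" "j = flip x c" "j = flip y d" unfolding nbrs_def by auto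
    then have yc: "y = flip (flip x c) d" by (metis flip_flip)
    have yx: "y \<noteq> x"
    proof
      assume "y = x"
      then have "flip x a = flip x b" using assms(5) by (metis flip_flip)
      then show False using assms(4) flip_inj_idx by blast
    qed
    have cd2: "c \<noteq> d"
    proof
      assume "c = d" then show False using yc yx by simp
    qed
    have "flip (flip x a) b = flip (flip x c) d" using yc assms(5) by simp
    then have "c = a \<or> c = b" using flip2_eq[OF _ assms(4)] by blast
    then show "j \<in> {flip x a, flip x b}" using cd by auto
  qed
qed


lemma cnj_sign[simp]: "cnj ((-1::complex) ^ p * complex_of_real r) = (-1) ^ p * complex_of_real r"
  by simp

lemma sum_t: assumes "simplex n t"
  shows "(\<Sum>k<n. complex_of_real (sqrt (t k)) * complex_of_real (sqrt (t k))) = 1"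
proof -
  have "(\<Sum>k<n. complex_of_real (sqrt (t k)) * complex_of_real (sqrt (t k))) = complex_of_real (\<Sum>k<n. t k)"
    unfolding of_real_sum
    by (rule sum.cong) (use assms in \<open>auto simp: simplex_def simp flip: of_real_mult\<close>)
  then show ?thesis using assms by (simp add: simplex_def flip: of_real_sum)
qed

lemma U_diag: assumes "simplex n t" "i \<in> Uset n"
  shows "(\<Sum>j\<in>nbrs n i \<inter> nbrs n i. ct n t (i, j) * cnj (ct n t (i, j))) = 1"
proof -
  have i: "i < 2^n" using assms unfolding Uset_def by auto
  have inj: "inj_on (flip i) {..<n}" by (meson flip_inj_idx inj_onI)
  have "(\<Sum>j\<in>nbrs n i \<inter> nbrs n i. ct n t (i, j) * cnj (ct n t (i, j)))
     = (\<Sum>k<n. ct n t (i, flip i k) * cnj (ct n t (i, flip i k)))"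
    using sum.reindex[OF inj] by (simp add: nbrs_eq[OF i])
  also have "\<dots> = (\<Sum>k<n. complex_of_real (sqrt (t k)) * complex_of_real (sqrt (t k)))"
    by (rule sum.cong) (auto simp: ct_val[OF assms(2)] minus_one_power_iff)
  finally show ?thesis using sum_t[OF assms(1)] by simp
qed

lemma V_diag: assumes "simplex n t" "j \<in> Vset n"
  shows "(\<Sum>i\<in>nbrs n j \<inter> nbrs n j. ct n t (i, j) * cnj (ct n t (i, j))) = 1"
proof -
  have j: "j < 2^n" using assms unfolding Vset_def by auto
  have inj: "inj_on (flip j) {..<n}" by (meson flip_inj_idx inj_onI)
  have "(\<Sum>i\<in>nbrs n j \<inter> nbrs n j. ct n t (i, j) * cnj (ct n t (i, j)))
     = (\<Sum>k<n. ct n t (flip j k, j) * cnj (ct n t (flip j k, j)))"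
    using sum.reindex[OF inj] by (simp add: nbrs_eq[OF j])
  also have "\<dots> = (\<Sum>k<n. complex_of_real (sqrt (t k)) * complex_of_real (sqrt (t k)))"
    by (rule sum.cong) (auto simp: ct_val2[OF assms(2)] minus_one_power_iff)
  finally show ?thesis using sum_t[OF assms(1)] by simp
qed


lemma U_off: assumes "i1 \<in> Uset n" "i2 \<in> Uset n" "a < n" "b < n" "a \<noteq> b"
    "i2 = flip (flip i1 a) b"
  shows "(\<Sum>j\<in>nbrs n i1 \<inter> nbrs n i2. ct n t (i1, j) * cnj (ct n t (i2, j))) = 0"
proof -
  have i1: "i1 < 2^n" using assms unfolding Uset_def by auto
  have ne: "flip i1 a \<noteq> flip i1 b" using assms(5) flip_inj_idx by blast
  have e1: "flip i1 a = flip i2 b" using assms(6) by simp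
  have e2: "flip i1 b = flip i2 a" using assms(6) by (metis flip_comm flip_flip)
  have sb: "(-1::complex) ^ par b i2 = (if a \<le> b then (-1) ^ par b i1 else - ((-1) ^ par b i1))"
    unfolding assms(6) sign_flip by simp
  have sa: "(-1::complex) ^ par a i2 = (if b \<le> a then (-1) ^ par a i1 else - ((-1) ^ par a i1))"
    unfolding assms(6) sign_flip by simp
  have "(\<Sum>j\<in>nbrs n i1 \<inter> nbrs n i2. ct n t (i1, j) * cnj (ct n t (i2, j)))
      = ct n t (i1, flip i1 a) * cnj (ct n t (i2, flip i2 b)) + ct n t (i1, flip i1 b) * cnj (ct n t (i2, flip i2 a))"
    unfolding nbrs_int_two[OF i1 assms(3-6)] sum.insert[OF finite.insertI[OF finite.emptyI] ] using ne
    by (simp add: e1[symmetric] e2[symmetric])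
  also have "\<dots> = 0"
  proof (cases "a < b")
    case True
    then have "\<not> b \<le> a" "a \<le> b" by auto
    then show ?thesis
    unfolding ct_val[OF assms(1) assms(3)] ct_val[OF assms(1) assms(4)]
      ct_val[OF assms(2) assms(3)] ct_val[OF assms(2) assms(4)] cnj_sign sa sb
    by (simp add: algebra_simps)
  next
    case False
    then have "b \<le> a" "\<not> a \<le> b" using assms(5) by auto
    then show ?thesis
    unfolding ct_val[OF assms(1) assms(3)] ct_val[OF assms(1) assms(4)]
      ct_val[OF assms(2) assms(3)] ct_val[OF assms(2) assms(4)] cnj_sign sa sb
    by (simp add: algebra_simps)
  qed
  finally show ?thesis .
qed

lemma V_off: assumes "j1 \<in> Vset n" "j2 \<in> Vset n" "a < n" "b < n" "a \<noteq> b"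
    "j2 = flip (flip j1 a) b"
  shows "(\<Sum>i\<in>nbrs n j1 \<inter> nbrs n j2. ct n t (i, j1) * cnj (ct n t (i, j2))) = 0"
proof -
  have j1: "j1 < 2^n" using assms unfolding Vset_def by auto
  have ne: "flip j1 a \<noteq> flip j1 b" using assms(5) flip_inj_idx by blast
  have e1: "flip j1 a = flip j2 b" using assms(6) by simp
  have e2: "flip j1 b = flip j2 a" using assms(6) by (metis flip_comm flip_flip)
  have sb: "(-1::complex) ^ par b (flip j2 b) = (if a \<le> b then - ((-1) ^ par b j1) else ((-1) ^ par b j1))"
    unfolding e1[symmetric] sign_flip by simp
  have sa: "(-1::complex) ^ par a (flip j2 a) = (if b \<le> a then - ((-1) ^ par a j1) else ((-1) ^ par a j1))"
    unfolding e2[symmetric] sign_flip by simp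
  have sa1: "(-1::complex) ^ par a (flip j1 a) = - ((-1) ^ par a j1)"
    unfolding sign_flip by simp
  have sb1: "(-1::complex) ^ par b (flip j1 b) = - ((-1) ^ par b j1)"
    unfolding sign_flip by simp
  have "(\<Sum>i\<in>nbrs n j1 \<inter> nbrs n j2. ct n t (i, j1) * cnj (ct n t (i, j2)))
      = ct n t (flip j1 a, j1) * cnj (ct n t (flip j2 b, j2)) + ct n t (flip j1 b, j1) * cnj (ct n t (flip j2 a, j2))"
    unfolding nbrs_int_two[OF j1 assms(3-6)] using ne e1 e2 by simp
  also have "\<dots> = 0"
    unfolding ct_val2[OF assms(1) assms(3)] ct_val2[OF assms(1) assms(4)]
      ct_val2[OF assms(2) assms(3)] ct_val2[OF assms(2) assms(4)] cnj_sign sa sb sa1 sb1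
    using assms(5) by auto
  finally show ?thesis .
qed


lemma Vc_sub: "Vc n c \<subseteq> Vset n" unfolding Vc_def Eset_def by auto
lemma Uc_sub: "Uc n c \<subseteq> Uset n" unfolding Uc_def Eset_def by auto

theorem proposition4p8:
  fixes n :: nat and t :: "nat \<Rightarrow> real"
  assumes "n \<ge> 1" and "simplex n t"
  shows "admissible n (ct n t) \<and> Uc n (ct n t) = Uset n"
proof -
  have V: "(\<Sum>i\<in>nbrs n j1 \<inter> nbrs n j2. ct n t (i, j1) * cnj (ct n t (i, j2))) = (if j1 = j2 then 1 else 0)"
    if "j1 \<in> Vset n" "j2 \<in> Vset n" for j1 j2
  proof (cases "j1 = j2")
    case True then show ?thesis using V_diag[OF assms(2) that(1)] by simp
  next
    case False
    show ?thesis
    proof (cases "\<exists>a b. a < n \<and> b < n \<and> a \<noteq> b \<and> j2 = flip (flip j1 a) b")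
      case True
      then obtain a b where "a < n" "b < n" "a \<noteq> b" "j2 = flip (flip j1 a) b" by blast
      then show ?thesis using V_off[OF that] False by simp
    next
      case no: False
      show ?thesis using nbrs_int_none[OF False no] False by simp
    qed
  qed
  have U: "(\<Sum>j\<in>nbrs n i1 \<inter> nbrs n i2. ct n t (i1, j) * cnj (ct n t (i2, j))) = (if i1 = i2 then 1 else 0)"
    if "i1 \<in> Uset n" "i2 \<in> Uset n" for i1 i2
  proof (cases "i1 = i2")
    case True then show ?thesis using U_diag[OF assms(2) that(1)] by simp
  next
    case False
    show ?thesis
    proof (cases "\<exists>a b. a < n \<and> b < n \<and> a \<noteq> b \<and> i2 = flip (flip i1 a) b")
      case True
      then obtain a b where "a < n" "b < n" "a \<noteq> b" "i2 = flip (flip i1 a) b" by blast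
      then show ?thesis using U_off[OF that] False by simp
    next
      case no: False
      show ?thesis using nbrs_int_none[OF False no] False by simp
    qed
  qed
  have adm: "admissible n (ct n t)"
    unfolding admissible_def using U V Uc_sub Vc_sub by blast
  have "Uset n \<subseteq> Uc n (ct n t)"
  proof
    fix i assume i: "i \<in> Uset n"
    obtain k where k: "k < n" "t k > 0"
    proof (rule ccontr)
      assume "\<not> thesis"
      then have "\<forall>k<n. t k \<le> 0" using that by force
      then have "(\<Sum>k<n. t k) \<le> 0" by (intro sum_nonpos) auto
      then show False using assms(2) unfolding simplex_def by simp
    qed
    have E: "(i, flip i k) \<in> Eset n" using i k flip_U unfolding Eset_def by blast
    have "ct n t (i, flip i k) \<noteq> 0" unfolding ct_val[OF i k(1)] using k(2) by simp
    then show "i \<in> Uc n (ct n t)" unfolding Uc_def using E by blast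
  qed
  then show ?thesis using adm Uc_sub by blast
qed

end
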